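(* Let $X$ be an infinite-dimensional complex Banach space and let $F \in \mathcal{B}(X)$ with $F^{n}$ of finite rank for some $n \in \mathbb{N}$. If $T \in \mathcal{B}(X)$ is lower semi-B-Fredholm and commutes with $F$, then $T+F$ is also lower semi-B-Fredholm.
   Context: $\mathcal{B}(X)$ is the algebra of bounded linear operators on $X$. An operator $S$ is lower semi-Fredholm if $\mathcal{R}(S)$ is closed and $\operatorname{codim}\mathcal{R}(S)<\infty$. $S$ is lower semi-B-Fredholm if there is $n\in\mathbb{N}$ such that $\mathcal{R}(S^n)$ is closed and the restriction $S_n$ of $S$ to $\mathcal{R}(S^n)$, viewed as a map $\mathcal{R}(S^n)\to\mathcal{R}(S^n)$, is lower semi-Fredholm. *)

theory Defs
  imports "HOL-Analysis.Analysis"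
begin

text \<open>Complex Banach spaces: a real Banach space with a compatible complex scalar
multiplication (the distribution has no complex vector space class).\<close>
class complex_banach = banach +
  fixes scaleC :: "complex \<Rightarrow> 'a \<Rightarrow> 'a"
  assumes scaleC_add_right: "scaleC a (x + y) = scaleC a x + scaleC a y"
    and scaleC_add_left: "scaleC (a + b) x = scaleC a x + scaleC b x"
    and scaleC_scaleC: "scaleC a (scaleC b x) = scaleC (a * b) x"
    and scaleC_one: "scaleC 1 x = x"
    and scaleR_scaleC: "scaleR r x = scaleC (complex_of_real r) x"
    and norm_scaleC: "norm (scaleC a x) = cmod a * norm x"

definition cspan :: "'a::complex_banach set \<Rightarrow> 'a set" where
  "cspan S = {\<Sum>x\<in>E. scaleC (c x) x | E c. finite E \<and> E \<subseteq> S}"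

definition bounded_clinear_op :: "('a::complex_banach \<Rightarrow> 'a) \<Rightarrow> bool" where
  "bounded_clinear_op f \<longleftrightarrow> bounded_linear f \<and> (\<forall>c x. f (scaleC c x) = scaleC c (f x))"

definition infinite_dimensional :: "'a::complex_banach itself \<Rightarrow> bool" where
  "infinite_dimensional _ \<longleftrightarrow> \<not> (\<exists>S::'a set. finite S \<and> cspan S = UNIV)"

definition finite_rank :: "('a::complex_banach \<Rightarrow> 'a) \<Rightarrow> bool" where
  "finite_rank f \<longleftrightarrow> (\<exists>S. finite S \<and> range f \<subseteq> cspan S)"

text \<open>The restriction of S to the (S-invariant) subspace M, viewed as a map M \<rightarrow> M,
is lower semi-Fredholm: its range S`M is closed and has finite codimension in M.\<close>
definition lower_semi_fredholm_on :: "'a::complex_banach set \<Rightarrow> ('a \<Rightarrow> 'a) \<Rightarrow> bool" where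
  "lower_semi_fredholm_on M S \<longleftrightarrow>
     closed (S ` M) \<and>
     (\<exists>E. finite E \<and> E \<subseteq> M \<and> M = {y + z | y z. y \<in> S ` M \<and> z \<in> cspan E})"

definition lower_semi_fredholm :: "('a::complex_banach \<Rightarrow> 'a) \<Rightarrow> bool" where
  "lower_semi_fredholm S \<longleftrightarrow> lower_semi_fredholm_on UNIV S"

definition lower_semi_B_fredholm :: "('a::complex_banach \<Rightarrow> 'a) \<Rightarrow> bool" where
  "lower_semi_B_fredholm T \<longleftrightarrow>
     (\<exists>n::nat. closed (range (T ^^ n)) \<and> lower_semi_fredholm_on (range (T ^^ n)) T)"

end

theory Submission
  imports Defs
begin


definition msum :: "'a::real_vector set \<Rightarrow> 'a set \<Rightarrow> 'a set" where
  "msum A B = {a + b | a b. a \<in> A \<and> b \<in> B}"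

lemma closed_sum_line:
  fixes W :: "'a::banach set"
  assumes cW: "closed W" and sW: "subspace W"
  shows "closed (msum W (span {d}))"
proof (cases "d \<in> W")
  case True
  have "msum W (span {d}) = W"
  proof
    show "msum W (span {d}) \<subseteq> W"
      using True sW unfolding msum_def
      by (auto simp: span_singleton intro: subspace_add subspace_scale)
    show "W \<subseteq> msum W (span {d})"
      unfolding msum_def by (force intro: span_zero)
  qed
  then show ?thesis using cW by simp
next
  case False
  have ne: "W \<noteq> {}" using sW subspace_0 by blast
  define \<delta> where "\<delta> = infdist d W"
  have dpos: "\<delta> > 0"
    using False in_closed_iff_infdist_zero[OF cW ne, of d] infdist_nonneg[of d W]
    unfolding \<delta>_def by linarith
  have key: "\<bar>t\<bar> * \<delta> \<le> norm (w + t *\<^sub>R d)" if "w \<in> W" for w t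
  proof (cases "t = 0")
    case True then show ?thesis by simp
  next
    case False
    define z where "z = - (1/t) *\<^sub>R w"
    have zW: "z \<in> W" unfolding z_def using that sW by (simp add: subspace_scale subspace_neg)
    have "w + t *\<^sub>R d = t *\<^sub>R (d - z)" unfolding z_def using False
      by (simp add: algebra_simps)
    then have "norm (w + t *\<^sub>R d) = \<bar>t\<bar> * dist d z" by (simp add: dist_norm)
    moreover have "\<delta> \<le> dist d z" unfolding \<delta>_def using zW by (rule infdist_le)
    ultimately show ?thesis by (simp add: mult_left_mono)
  qed
  show ?thesis
    unfolding closed_sequential_limits
  proof (intro allI impI, elim conjE)
    fix f l assume fin: "\<forall>n. f n \<in> msum W (span {d})" and lim: "f \<longlonglongrightarrow> l"
    have "\<forall>n. \<exists>w t. w \<in> W \<and> f n = w + t *\<^sub>R d"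
    proof
      fix n
      have "f n \<in> msum W (span {d})" using fin by blast
      then obtain a b where "f n = a + b" "a \<in> W" "b \<in> range (\<lambda>k. k *\<^sub>R d)"
        unfolding msum_def span_singleton by blast
      then show "\<exists>w t. w \<in> W \<and> f n = w + t *\<^sub>R d" by auto
    qed
    then obtain w t where wt: "\<And>n. w n \<in> W" "\<And>n. f n = w n + t n *\<^sub>R d" by metis
    have "Cauchy t"
    proof (rule metric_CauchyI)
      fix e :: real assume "e > 0"
      then have "e * \<delta> > 0" using dpos by simp
      from lim have "Cauchy f" by (rule LIMSEQ_imp_Cauchy)
      then obtain N where N: "\<And>m n. m \<ge> N \<Longrightarrow> n \<ge> N \<Longrightarrow> dist (f m) (f n) < e * \<delta>"
        using \<open>e * \<delta> > 0\<close> by (meson metric_CauchyD)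
      show "\<exists>N. \<forall>m\<ge>N. \<forall>n\<ge>N. dist (t m) (t n) < e"
      proof (intro exI allI impI)
        fix m n assume "m \<ge> N" "n \<ge> N"
        have "w m - w n \<in> W" using wt sW by (simp add: subspace_diff)
        then have "\<bar>t m - t n\<bar> * \<delta> \<le> norm ((w m - w n) + (t m - t n) *\<^sub>R d)" by (rule key)
        also have "(w m - w n) + (t m - t n) *\<^sub>R d = f m - f n" using wt by (simp add: algebra_simps)
        also have "norm (f m - f n) < e * \<delta>" using N[OF \<open>m \<ge> N\<close> \<open>n \<ge> N\<close>] by (simp add: dist_norm)
        finally have "\<bar>t m - t n\<bar> * \<delta> < e * \<delta>" .
        then show "dist (t m) (t n) < e" using dpos by (simp add: dist_real_def)
      qed
    qed
    then obtain \<tau> where tau: "t \<longlonglongrightarrow> \<tau>" using Cauchy_convergent_iff convergent_def by blast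
    have "(\<lambda>n. f n - t n *\<^sub>R d) \<longlonglongrightarrow> l - \<tau> *\<^sub>R d"
      by (intro tendsto_intros lim tau)
    moreover have "\<And>n. f n - t n *\<^sub>R d = w n" using wt by simp
    ultimately have "w \<longlonglongrightarrow> l - \<tau> *\<^sub>R d" by simp
    then have "l - \<tau> *\<^sub>R d \<in> W" using closed_sequentially[OF cW] wt(1) by blast
    moreover have "\<tau> *\<^sub>R d \<in> span {d}" by (simp add: span_base span_scale)
    moreover have "l = (l - \<tau> *\<^sub>R d) + \<tau> *\<^sub>R d" by simp
    ultimately show "l \<in> msum W (span {d})" unfolding msum_def by blast
  qed
qed

lemma msum_assoc: "msum A (msum B C) = msum (msum A B) C"
proof (intro set_eqI iffI)
  fix x assume "x \<in> msum A (msum B C)"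
  then obtain a b c where x: "x = a + (b + c)" "a \<in> A" "b \<in> B" "c \<in> C" unfolding msum_def by blast
  then have "x = (a + b) + c" by (simp add: add.assoc)
  then show "x \<in> msum (msum A B) C" using x unfolding msum_def by blast
next
  fix x assume "x \<in> msum (msum A B) C"
  then obtain a b c where x: "x = (a + b) + c" "a \<in> A" "b \<in> B" "c \<in> C" unfolding msum_def by blast
  then have "x = a + (b + c)" by (simp add: add.assoc)
  then show "x \<in> msum A (msum B C)" using x unfolding msum_def by blast
qed

lemma msum_insert: "msum W (span (insert d D)) = msum (msum W (span D)) (span {d})"
proof -
  have "span (insert d D) = msum (span D) (span {d})"
    unfolding msum_def using span_Un[of D "{d}"] by simp
  then show ?thesis by (simp add: msum_assoc)
qed

lemma subspace_msum: "subspace A \<Longrightarrow> subspace B \<Longrightarrow> subspace (msum A B)"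
  unfolding msum_def by (rule subspace_sums)

lemma closed_sum_fin:
  fixes W :: "'a::banach set"
  assumes "finite D" "closed W" "subspace W"
  shows "closed (msum W (span D)) \<and> subspace (msum W (span D))"
  using assms(1)
proof (induction D rule: finite_induct)
  case empty
  have "msum W (span {}) = W" unfolding msum_def by auto
  then show ?case using assms by simp
next
  case (insert d D)
  have "subspace (span {d})" by simp
  then show ?case using insert.IH closed_sum_line[of "msum W (span D)" d] subspace_msum
    by (simp only: msum_insert[of W d D]) blast
qed

lemma closed_span_fin:
  fixes D :: "'a::banach set"
  assumes "finite D" shows "closed (span D)"
proof -
  have "msum {0} (span D) = span D" unfolding msum_def by auto
  then show ?thesis using closed_sum_fin[OF assms, of "{0}"] by simp
qed



lemma open_mapping_baire:
  fixes M :: "'b::banach \<Rightarrow> 'c::banach"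
  assumes lin: "bounded_linear M" and cX: "closed X0" and sX: "subspace X0"
    and cY: "closed Y" and MY: "M ` X0 = Y"
  shows "\<exists>n r y0. r > 0 \<and> y0 \<in> Y \<and> Y \<inter> ball y0 r \<subseteq> closure (M ` (X0 \<inter> cball 0 (real n)))"
proof (rule ccontr)
  assume H: "\<not> ?thesis"
  define C where "C n = closure (M ` (X0 \<inter> cball 0 (real n)))" for n
  have CY: "C n \<subseteq> Y" for n
    unfolding C_def using MY cY by (intro closure_minimal) auto
  have cov: "Y = (\<Union>n. C n)"
  proof
    show "Y \<subseteq> (\<Union>n. C n)"
    proof
      fix y assume "y \<in> Y"
      then obtain x where x: "x \<in> X0" "y = M x" using MY by blast
      have "norm x \<le> real (nat \<lceil>norm x\<rceil>)" by linarith
      then have "x \<in> X0 \<inter> cball 0 (real (nat \<lceil>norm x\<rceil>))" using x by simp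
      then have "M x \<in> M ` (X0 \<inter> cball 0 (real (nat \<lceil>norm x\<rceil>)))" by (rule imageI)
      then have "M x \<in> closure (M ` (X0 \<inter> cball 0 (real (nat \<lceil>norm x\<rceil>))))"
        by (rule subsetD[OF closure_subset])
      then have "y \<in> C (nat \<lceil>norm x\<rceil>)" unfolding C_def x(2) .
      then show "y \<in> (\<Union>n. C n)" by blast
    qed
    show "(\<Union>n. C n) \<subseteq> Y" using CY by blast
  qed
  have "top_of_set Y interior_of \<Union>(range C) = {}"
  proof (rule Baire_category_alt)
    show "completely_metrizable_space (top_of_set Y) \<or>
          locally_compact_space (top_of_set Y) \<and> regular_space (top_of_set Y)"
    proof -
      have "closedin euclidean Y" using cY closed_closedin by blast
      then have "completely_metrizable_space (top_of_set Y)"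
        by (rule completely_metrizable_space_closedin[OF completely_metrizable_space_euclidean])
      then show ?thesis by blast
    qed
    show "countable (range C)" by simp
    fix T assume "T \<in> range C"
    then obtain n where T: "T = C n" by blast
    have "closedin (top_of_set Y) (Y \<inter> C n)" unfolding C_def by (rule closedin_closed_Int) simp
    moreover have "Y \<inter> C n = C n" using CY[of n] by blast
    ultimately have "closedin (top_of_set Y) T" using T by simp
    moreover have "top_of_set Y interior_of T = {}"
    proof (rule ccontr)
      assume "top_of_set Y interior_of T \<noteq> {}"
      then obtain y0 where y0: "y0 \<in> top_of_set Y interior_of T" by blast
      have "openin (top_of_set Y) (top_of_set Y interior_of T)" by simp
      then obtain r where r: "r > 0" "ball y0 r \<inter> Y \<subseteq> top_of_set Y interior_of T"
        using y0 unfolding openin_contains_ball by blast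
      have "top_of_set Y interior_of T \<subseteq> T" by (rule interior_of_subset)
      moreover have "y0 \<in> Y" using y0 interior_of_subset_topspace by fastforce
      ultimately have "Y \<inter> ball y0 r \<subseteq> C n"
        using r(2) T by blast
      then have "Y \<inter> ball y0 r \<subseteq> closure (M ` (X0 \<inter> cball 0 (real n)))"
        by (simp add: C_def)
      then have "\<exists>n r y0. r > 0 \<and> y0 \<in> Y \<and> Y \<inter> ball y0 r \<subseteq> closure (M ` (X0 \<inter> cball 0 (real n)))"
        using r(1) \<open>y0 \<in> Y\<close> by blast
      then show False using H by blast
    qed
    ultimately show "closedin (top_of_set Y) T \<and> top_of_set Y interior_of T = {}" by blast
  qed
  moreover have "top_of_set Y interior_of \<Union>(range C) = Y"
  proof -
    have "top_of_set Y interior_of (topspace (top_of_set Y)) = topspace (top_of_set Y)"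
      by (rule interior_of_topspace)
    then show ?thesis using cov by simp
  qed
  moreover have "0 \<in> Y"
  proof -
    have "0 \<in> X0" using sX by (rule subspace_0)
    moreover have "M 0 = 0" using bounded_linear.linear[OF lin] by (rule linear_0)
    ultimately show ?thesis using MY by force
  qed
  ultimately show False by blast
qed



lemma open_mapping_bound:
  fixes M :: "'b::banach \<Rightarrow> 'c::banach"
  assumes lin: "bounded_linear M" and cX: "closed X0" and sX: "subspace X0"
    and cY: "closed Y" and MY: "M ` X0 = Y"
  shows "\<exists>C. \<forall>y\<in>Y. \<exists>x\<in>X0. M x = y \<and> norm x \<le> C * norm y"
proof -
  have ln: "linear M" using lin by (rule bounded_linear.linear)
  have sY: "subspace Y" using MY linear_subspace_image[OF ln sX] by simp
  obtain n r y0 where r: "r > 0" and y0: "y0 \<in> Y"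
    and B: "Y \<inter> ball y0 r \<subseteq> closure (M ` (X0 \<inter> cball 0 (real n)))"
    using open_mapping_baire[OF assms] by blast
  define A where "A = X0 \<inter> cball 0 (real n)"
  have B1: "\<exists>x\<in>X0. norm x \<le> 2 * real n \<and> norm (M x - y) < e"
    if y: "y \<in> Y" "norm y < r" and e: "e > 0" for y e
  proof -
    have "y0 + y \<in> Y" using sY y0 y(1) by (simp add: subspace_add)
    moreover have "y0 + y \<in> ball y0 r" using y by (simp add: dist_norm)
    ultimately have c1: "y0 + y \<in> closure (M ` A)" using B unfolding A_def by blast
    have "y0 \<in> ball y0 r" using r by simp
    then have c2: "y0 \<in> closure (M ` A)" using B y0 unfolding A_def by blast
    have e2: "e / 2 > 0" using e by simp
    obtain z1 where z1: "z1 \<in> M ` A" "dist z1 (y0 + y) < e / 2"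
      using c1 e2 unfolding closure_approachable by blast
    obtain z2 where z2: "z2 \<in> M ` A" "dist z2 y0 < e / 2"
      using c2 e2 unfolding closure_approachable by blast
    obtain a1 where a1: "a1 \<in> A" "z1 = M a1" using z1 by blast
    obtain a2 where a2: "a2 \<in> A" "z2 = M a2" using z2 by blast
    have "a1 - a2 \<in> X0" using a1 a2 sX unfolding A_def by (simp add: subspace_diff)
    moreover have "norm (a1 - a2) \<le> 2 * real n"
    proof -
      have "norm (a1 - a2) \<le> norm a1 + norm a2" by (rule norm_triangle_ineq4)
      moreover have "norm a1 \<le> real n" "norm a2 \<le> real n" using a1 a2 unfolding A_def by auto
      ultimately show ?thesis by linarith
    qed
    moreover have "norm (M (a1 - a2) - y) < e"
    proof -
      have eq: "M (a1 - a2) - y = (M a1 - (y0 + y)) - (M a2 - y0)"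
        using linear_diff[OF ln] by (simp add: algebra_simps)
      have "norm (M (a1 - a2) - y) \<le> norm (M a1 - (y0 + y)) + norm (M a2 - y0)"
        unfolding eq by (rule norm_triangle_ineq4)
      moreover have "norm (M a1 - (y0 + y)) < e / 2" using z1 a1 by (simp add: dist_norm)
      moreover have "norm (M a2 - y0) < e / 2" using z2 a2 by (simp add: dist_norm)
      ultimately show ?thesis by linarith
    qed
    ultimately show ?thesis by blast
  qed
  define K where "K = 4 * real n / r"
  have K0: "K \<ge> 0" unfolding K_def using r by simp
  have B2: "\<exists>x. x \<in> X0 \<and> norm x \<le> K * norm y \<and> norm (M x - y) < e"
    if y: "y \<in> Y" and e: "e > 0" for y e
  proof (cases "y = 0")
    case True
    have "M 0 = 0" using ln by (rule linear_0)
    then show ?thesis using True e sX subspace_0 by (intro exI[of _ 0]) auto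
  next
    case False
    define t where "t = r / (2 * norm y)"
    have t0: "t > 0" unfolding t_def using False r by simp
    have "t *\<^sub>R y \<in> Y" using sY y by (rule subspace_scale)
    moreover have "norm (t *\<^sub>R y) < r"
    proof -
      have "norm (t *\<^sub>R y) = r / 2" unfolding t_def using False r by simp
      then show ?thesis using r by simp
    qed
    moreover have "e * t > 0" using e t0 by simp
    ultimately obtain x' where x': "x' \<in> X0" "norm x' \<le> 2 * real n" "norm (M x' - t *\<^sub>R y) < e * t"
      using B1 by blast
    define x where "x = (1 / t) *\<^sub>R x'"
    have "x \<in> X0" unfolding x_def using sX x'(1) by (rule subspace_scale)
    moreover have "norm x \<le> K * norm y"
    proof -
      have "norm x = norm x' / t" unfolding x_def using t0 by simp
      also have "\<dots> \<le> 2 * real n / t" using x'(2) t0 by (simp add: divide_right_mono)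
      also have "\<dots> = K * norm y" unfolding K_def t_def using False r by (simp add: field_simps)
      finally show ?thesis .
    qed
    moreover have "norm (M x - y) < e"
    proof -
      have "M x - y = (1 / t) *\<^sub>R (M x' - t *\<^sub>R y)"
        unfolding x_def using linear_scale[OF ln] t0 by (simp add: algebra_simps)
      then have "norm (M x - y) = norm (M x' - t *\<^sub>R y) / t" using t0 by simp
      also have "\<dots> < e" using x'(3) t0 by (simp add: divide_less_eq)
      finally show ?thesis .
    qed
    ultimately show ?thesis by blast
  qed
  define g where "g y e = (SOME x. x \<in> X0 \<and> norm x \<le> K * norm y \<and> norm (M x - y) < e)" for y e
  have g: "g y e \<in> X0 \<and> norm (g y e) \<le> K * norm y \<and> norm (M (g y e) - y) < e"
    if "y \<in> Y" "e > 0" for y e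
    unfolding g_def using someI_ex[OF B2[OF that]] .
  have "\<forall>y\<in>Y. \<exists>x\<in>X0. M x = y \<and> norm x \<le> (2 * K) * norm y"
  proof
    fix y assume yY: "y \<in> Y"
    show "\<exists>x\<in>X0. M x = y \<and> norm x \<le> (2 * K) * norm y"
    proof (cases "y = 0")
      case True
      have "M 0 = 0" using ln by (rule linear_0)
      then show ?thesis using True sX subspace_0 by (intro bexI[of _ 0]) auto
    next
      case False
      define a where "a = norm y"
      have a0: "a > 0" unfolding a_def using False by simp
      define e where "e j = a / 2 ^ Suc j" for j :: nat
      have e0: "e j > 0" for j unfolding e_def using a0 by simp
      define yq where "yq = rec_nat y (\<lambda>j v. v - M (g v (e j)))"
      have yq0: "yq 0 = y" unfolding yq_def by simp
      have yqS: "yq (Suc j) = yq j - M (g (yq j) (e j))" for j unfolding yq_def by simp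
      define xq where "xq j = g (yq j) (e j)" for j
      have inv: "yq j \<in> Y \<and> norm (yq j) \<le> a * (1/2) ^ j" for j
      proof (induction j)
        case 0
        then show ?case using yq0 yY a_def by simp
      next
        case (Suc j)
        then have yj: "yq j \<in> Y" by simp
        have gj: "g (yq j) (e j) \<in> X0 \<and> norm (g (yq j) (e j)) \<le> K * norm (yq j)
                  \<and> norm (M (g (yq j) (e j)) - yq j) < e j"
          using g[OF yj e0] .
        have "M (g (yq j) (e j)) \<in> Y" using gj MY by blast
        then have "yq (Suc j) \<in> Y" unfolding yqS using sY yj by (simp add: subspace_diff)
        moreover have "norm (yq (Suc j)) \<le> a * (1/2) ^ Suc j"
        proof -
          have "norm (yq (Suc j)) = norm (M (g (yq j) (e j)) - yq j)"
            unfolding yqS by (simp add: norm_minus_commute)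
          also have "\<dots> \<le> e j" using gj by simp
          also have "e j = a * (1/2) ^ Suc j" unfolding e_def by (simp add: power_one_over)
          finally show ?thesis .
        qed
        ultimately show ?case by blast
      qed
      have xq: "xq j \<in> X0 \<and> norm (xq j) \<le> K * a * (1/2) ^ j" for j
      proof -
        have "yq j \<in> Y" using inv by blast
        then have gj: "xq j \<in> X0 \<and> norm (xq j) \<le> K * norm (yq j)"
          unfolding xq_def using g[OF _ e0] by blast
        moreover have "K * norm (yq j) \<le> K * (a * (1/2) ^ j)"
          using inv[of j] K0 by (simp add: mult_left_mono)
        ultimately show ?thesis by (simp add: mult.assoc)
      qed
      have sg: "summable (\<lambda>j. K * a * (1/2::real) ^ j)"
        by (intro summable_mult summable_geometric) simp
      have snx: "summable (\<lambda>j. norm (xq j))"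
        by (rule summable_comparison_test'[OF sg, of 0]) (use xq in simp)
      have sx: "summable xq" using snx by (rule summable_norm_cancel)
      define x where "x = suminf xq"
      have "x \<in> X0"
      proof -
        have "(\<lambda>N. \<Sum>j<N. xq j) \<longlonglongrightarrow> x" unfolding x_def using sx by (rule summable_LIMSEQ)
        moreover have "(\<Sum>j<N. xq j) \<in> X0" for N using sX xq by (simp add: subspace_sum)
        ultimately show ?thesis using closed_sequentially[OF cX, of "\<lambda>N. sum xq {..<N}" x] by blast
      qed
      moreover have "norm x \<le> (2 * K) * norm y"
      proof -
        have "norm x \<le> (\<Sum>j. norm (xq j))" unfolding x_def using snx by (rule summable_norm)
        also have "\<dots> \<le> (\<Sum>j. K * a * (1/2::real) ^ j)"
          using snx sg xq by (intro suminf_le) auto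
        also have "\<dots> = K * a * 2"
          using suminf_mult[OF summable_geometric[of "1/2::real"], of "K * a"] suminf_geometric[of "1/2::real"]
          by simp
        finally show ?thesis unfolding a_def by (simp add: mult_ac)
      qed
      moreover have "M x = y"
      proof -
        have Mx: "M x = (\<Sum>j. M (xq j))" unfolding x_def using bounded_linear.suminf[OF lin sx] .
        have "M (xq j) = yq j - yq (Suc j)" for j unfolding xq_def yqS by simp
        then have Mx': "M x = (\<Sum>j. yq j - yq (Suc j))" using Mx by simp
        have "yq \<longlonglongrightarrow> 0"
        proof (rule Lim_null_comparison)
          show "\<forall>\<^sub>F j in sequentially. norm (yq j) \<le> a * (1/2) ^ j" using inv by simp
          show "(\<lambda>j. a * (1/2::real) ^ j) \<longlonglongrightarrow> 0"
            by (intro tendsto_mult_right_zero LIMSEQ_power_zero) simp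
        qed
        then have "(\<lambda>j. yq j - yq (Suc j)) sums (yq 0 - 0)" by (rule telescope_sums')
        then show ?thesis using Mx' yq0 sums_unique by force
      qed
      ultimately show ?thesis by blast
    qed
  qed
  then show ?thesis by blast
qed



lemma indep_span_disj:
  fixes B :: "'a::real_vector set"
  assumes ind: "independent B" and fin: "finite B" and AB: "A \<subseteq> B"
  shows "C \<subseteq> B - A \<Longrightarrow> v \<in> span C \<Longrightarrow> v \<in> span A \<Longrightarrow> v = 0"
proof -
  have "finite C" if "C \<subseteq> B - A" for C using fin that finite_subset by blast
  have main: "\<forall>v. v \<in> span C \<longrightarrow> v \<in> span A \<longrightarrow> v = 0" if "finite C" "C \<subseteq> B - A" for C
    using that
  proof (induction C rule: finite_induct)
    case empty
    then show ?case by simp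
  next
    case (insert c C)
    show ?case
    proof (intro allI impI)
      fix v assume v1: "v \<in> span (insert c C)" and v2: "v \<in> span A"
      from v1 obtain t where t: "v - t *\<^sub>R c \<in> span C" by (auto simp: span_insert)
      show "v = 0"
      proof (cases "t = 0")
        case True
        then show ?thesis using insert t v2 by auto
      next
        case False
        have "c = (1/t) *\<^sub>R (v - (v - t *\<^sub>R c))" using False by simp
        moreover have "v - (v - t *\<^sub>R c) \<in> span (B - {c})"
        proof (rule span_diff)
          have "A \<subseteq> B - {c}" using insert.prems AB by auto
          then show "v \<in> span (B - {c})" using v2 span_mono by blast
          have "C \<subseteq> B - {c}" using insert.prems insert.hyps by auto
          then show "v - t *\<^sub>R c \<in> span (B - {c})" using t span_mono by blast
        qed
        ultimately have "c \<in> span (B - {c})" by (metis span_scale)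
        moreover have "c \<in> B" using insert.prems by auto
        ultimately have "dependent B" unfolding dependent_def by blast
        then show ?thesis using ind by blast
      qed
    qed
  qed
  then show "C \<subseteq> B - A \<Longrightarrow> v \<in> span C \<Longrightarrow> v \<in> span A \<Longrightarrow> v = 0"
    using fin by (meson finite_Diff finite_subset)
qed

lemma grp1: fixes a :: "'a::ab_group_add" shows "a + b = c - (d + e) \<Longrightarrow> b + e = c - d - a"
  by (metis add.commute add_diff_cancel_left' diff_diff_eq2 diff_add_eq diff_eq_eq)

lemma closed_range_fincodim:
  fixes L :: "'a::banach \<Rightarrow> 'a"
  assumes lin: "bounded_linear L" and cY: "closed Y" and sY: "subspace Y" and RY: "range L \<subseteq> Y"
    and fD: "finite D" and YD: "Y \<subseteq> msum (range L) (span D)"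
  shows "closed (range L)"
proof -
  have ln: "linear L" using lin by (rule bounded_linear.linear)
  have sR: "subspace (range L)" using linear_subspace_image[OF ln subspace_UNIV] .
  define P where "P = Y \<inter> span D"
  have sP: "subspace P" unfolding P_def by (rule subspace_inter[OF sY subspace_span])
  obtain B1 where B1: "B1 \<subseteq> range L \<inter> P" "independent B1" "range L \<inter> P \<subseteq> span B1"
    "card B1 = dim (range L \<inter> P)"
    by (rule basis_exists[of "range L \<inter> P"])
  have "B1 \<subseteq> P" using B1(1) by blast
  then obtain B where B: "B1 \<subseteq> B" "B \<subseteq> P" "independent B" "P \<subseteq> span B"
    using maximal_independent_subset_extend[OF _ B1(2)] by metis
  have "B \<subseteq> span D" using B(2) unfolding P_def by blast
  then have fB: "finite B" using independent_span_bound[OF fD B(3)] by blast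
  define D' where "D' = B - B1"
  have fD': "finite D'" unfolding D'_def using fB by simp
  have spanP: "span P = P" using sP by simp
  have D'P: "span D' \<subseteq> P"
  proof -
    have "D' \<subseteq> P" unfolding D'_def using B(2) by blast
    then have "span D' \<subseteq> span P" by (rule span_mono)
    then show ?thesis using spanP by simp
  qed
  have disj: "v = 0" if "v \<in> span D'" "v \<in> range L" for v
  proof -
    have "v \<in> P" using D'P that by blast
    then have "v \<in> span B1" using B1(3) that by blast
    then show ?thesis using indep_span_disj[OF B(3) fB B(1), of D' v] that unfolding D'_def by blast
  qed
  have spanR: "span (range L) = range L" using sR by simp
  have YD': "Y \<subseteq> msum (range L) (span D')"
  proof
    fix y assume yY: "y \<in> Y"
    then obtain u w where uw: "y = u + w" "u \<in> range L" "w \<in> span D" using YD unfolding msum_def by blast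
    have "w = y - u" using uw by simp
    moreover have "y - u \<in> Y" using sY yY RY uw(2) by (simp add: subspace_diff subsetD)
    ultimately have "w \<in> P" unfolding P_def using uw(3) by simp
    then have "w \<in> span B" using B(4) by blast
    moreover have "B = B1 \<union> D'" unfolding D'_def using B(1) by blast
    ultimately have "w \<in> span (B1 \<union> D')" by simp
    then obtain b1 d' where bd: "w = b1 + d'" "b1 \<in> span B1" "d' \<in> span D'"
      unfolding span_Un by blast
    have "span B1 \<subseteq> span (range L)" using B1(1) by (intro span_mono) blast
    then have "b1 \<in> range L" using bd(2) spanR by blast
    then have "u + b1 \<in> range L" using sR uw(2) by (simp add: subspace_add)
    moreover have "y = (u + b1) + d'" using uw bd by (simp add: add.assoc)
    ultimately show "y \<in> msum (range L) (span D')" unfolding msum_def using bd(3) by blast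
  qed
  define M where "M = (\<lambda>p::'a \<times> 'a. L (fst p) + snd p)"
  have linM: "bounded_linear M" unfolding M_def
    by (intro bounded_linear_add bounded_linear_compose[OF lin bounded_linear_fst] bounded_linear_snd)
  define X0 where "X0 = (UNIV :: 'a set) \<times> span D'"
  have cX: "closed X0" unfolding X0_def using closed_span_fin[OF fD'] by (intro closed_Times) auto
  have sX: "subspace X0"
    unfolding subspace_def X0_def
  proof (intro conjI ballI allI)
    show "(0::'a \<times> 'a) \<in> UNIV \<times> span D'" by (simp add: zero_prod_def span_zero)
    fix x y :: "'a \<times> 'a" assume "x \<in> UNIV \<times> span D'" "y \<in> UNIV \<times> span D'"
    then show "x + y \<in> UNIV \<times> span D'" by (cases x, cases y) (simp add: span_add)
  next
    fix c :: real and x :: "'a \<times> 'a" assume "x \<in> UNIV \<times> span D'"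
    then show "c *\<^sub>R x \<in> UNIV \<times> span D'" by (cases x) (simp add: span_scale)
  qed
  have MY: "M ` X0 = Y"
  proof
    show "M ` X0 \<subseteq> Y"
    proof
      fix z assume "z \<in> M ` X0"
      then obtain x s where xs: "s \<in> span D'" "z = L x + s" unfolding X0_def M_def by auto
      have "L x \<in> Y" using RY by blast
      moreover have "s \<in> Y" using xs(1) D'P unfolding P_def by blast
      ultimately show "z \<in> Y" using xs(2) sY by (simp add: subspace_add)
    qed
    show "Y \<subseteq> M ` X0"
    proof
      fix y assume "y \<in> Y"
      then obtain u d where ud: "y = u + d" "u \<in> range L" "d \<in> span D'" using YD' unfolding msum_def by blast
      then obtain x where "u = L x" by blast
      then have "y = M (x, d)" unfolding M_def using ud by simp
      moreover have "(x, d) \<in> X0" unfolding X0_def using ud by simp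
      ultimately show "y \<in> M ` X0" by blast
    qed
  qed
  obtain C where C: "\<forall>y\<in>Y. \<exists>p\<in>X0. M p = y \<and> norm p \<le> C * norm y"
    using open_mapping_bound[OF linM cX sX cY MY] by blast
  show ?thesis
    unfolding closed_sequential_limits
  proof (intro allI impI, elim conjE)
    fix f l assume fR: "\<forall>n. f n \<in> range L" and lim: "f \<longlonglongrightarrow> l"
    have "\<forall>n. \<exists>z. f n = L z" using fR by blast
    from choice[OF this] obtain xs where xs: "\<And>n. f n = L (xs n)" by blast
    have fY: "\<And>n. f n \<in> Y" using fR RY by blast
    have lY: "l \<in> Y" using closed_sequentially[OF cY, of f l] fY lim by blast
    then obtain q where q: "q \<in> X0" "M q = l" using MY by blast
    define x where "x = fst q"
    define s where "s = snd q"
    have s: "s \<in> span D'" "l = L x + s" using q unfolding s_def x_def X0_def M_def by auto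
    have "\<forall>n. \<exists>p. p \<in> X0 \<and> M p = f n - l \<and> norm p \<le> C * norm (f n - l)"
    proof
      fix n
      have "f n - l \<in> Y" using sY fY lY by (simp add: subspace_diff)
      then show "\<exists>p. p \<in> X0 \<and> M p = f n - l \<and> norm p \<le> C * norm (f n - l)" using C by blast
    qed
    from choice[OF this] obtain p where p: "\<And>n. p n \<in> X0 \<and> M (p n) = f n - l \<and> norm (p n) \<le> C * norm (f n - l)"
      by blast
    have bound: "norm s \<le> C * norm (f n - l)" for n
    proof -
      have pn: "snd (p n) \<in> span D'" using p[of n] unfolding X0_def by (auto simp: mem_Times_iff)
      have "L (fst (p n)) + snd (p n) = L (xs n) - (L x + s)" using p[of n] xs[of n] s(2)
        unfolding M_def by simp
      then have "snd (p n) + s = L (xs n) - L x - L (fst (p n))" by (rule grp1)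
      also have "\<dots> = L (xs n - x - fst (p n))" using linear_diff[OF ln] by simp
      finally have "snd (p n) + s = L (xs n - x - fst (p n))" .
      then have "snd (p n) + s \<in> range L" by simp
      moreover have "snd (p n) + s \<in> span D'" using pn s(1) by (simp add: span_add)
      ultimately have "snd (p n) + s = 0" using disj by blast
      then have "s = - snd (p n)" by (simp add: eq_neg_iff_add_eq_0 add.commute)
      then have "norm s = norm (snd (p n))" by simp
      also have "\<dots> \<le> norm (p n)" by (cases "p n") (simp add: norm_snd_le)
      also have "\<dots> \<le> C * norm (f n - l)" using p[of n] by blast
      finally show ?thesis .
    qed
    have "(\<lambda>n. C * norm (f n - l)) \<longlonglongrightarrow> 0"
    proof -
      have "(\<lambda>n. f n - l) \<longlonglongrightarrow> 0" using lim by (rule LIM_zero)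
      then have "(\<lambda>n. norm (f n - l)) \<longlonglongrightarrow> 0" by (rule tendsto_norm_zero)
      then show ?thesis by (rule tendsto_mult_right_zero)
    qed
    then have "norm s \<le> 0" using bound by (intro LIMSEQ_le_const) auto
    then have "s = 0" by simp
    then have "l = L x" using s by simp
    then show "l \<in> range L" by simp
  qed
qed



lemma msum_trans1:
  assumes "A \<subseteq> msum B (span D1)" "B \<subseteq> msum C (span D2)"
  shows "A \<subseteq> msum C (span (D1 \<union> D2))"
proof
  fix a assume "a \<in> A"
  then obtain b d1 where "a = b + d1" "b \<in> B" "d1 \<in> span D1" using assms(1) unfolding msum_def by blast
  moreover obtain c d2 where "b = c + d2" "c \<in> C" "d2 \<in> span D2" using assms(2) \<open>b \<in> B\<close> unfolding msum_def by blast
  ultimately have "a = c + (d2 + d1)" "c \<in> C" by (simp_all add: add.assoc)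
  moreover have "d2 + d1 \<in> span (D1 \<union> D2)"
    using \<open>d1 \<in> span D1\<close> \<open>d2 \<in> span D2\<close> span_mono[of D1 "D1 \<union> D2"] span_mono[of D2 "D1 \<union> D2"]
    by (intro span_add) auto
  ultimately show "a \<in> msum C (span (D1 \<union> D2))" unfolding msum_def by blast
qed

lemma msum_trans2:
  assumes "A \<subseteq> msum B (span D1)"
  shows "msum A (span D2) \<subseteq> msum B (span (D1 \<union> D2))"
proof
  fix x assume "x \<in> msum A (span D2)"
  then obtain a d2 where "x = a + d2" "a \<in> A" "d2 \<in> span D2" unfolding msum_def by blast
  moreover obtain b d1 where "a = b + d1" "b \<in> B" "d1 \<in> span D1" using assms \<open>a \<in> A\<close> unfolding msum_def by blast
  ultimately have "x = b + (d1 + d2)" "b \<in> B" by (simp_all add: add.assoc)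
  moreover have "d1 + d2 \<in> span (D1 \<union> D2)"
    using \<open>d1 \<in> span D1\<close> \<open>d2 \<in> span D2\<close> span_mono[of D1 "D1 \<union> D2"] span_mono[of D2 "D1 \<union> D2"]
    by (intro span_add) auto
  ultimately show "x \<in> msum B (span (D1 \<union> D2))" unfolding msum_def by blast
qed

lemma msum_self: "A \<subseteq> msum A (span D)"
proof
  fix a assume "a \<in> A"
  moreover have "a = a + 0" by simp
  moreover have "(0::'a) \<in> span D" by (rule span_zero)
  ultimately show "a \<in> msum A (span D)" unfolding msum_def by blast
qed

lemma image_msum_sub:
  assumes "linear f"
  shows "f ` msum A B \<subseteq> msum (f ` A) (f ` B)"
proof
  fix y assume "y \<in> f ` msum A B"
  then obtain a b where "y = f (a + b)" "a \<in> A" "b \<in> B" unfolding msum_def by blast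
  then have "y = f a + f b" using linear_add[OF assms] by simp
  then show "y \<in> msum (f ` A) (f ` B)" unfolding msum_def using \<open>a \<in> A\<close> \<open>b \<in> B\<close> by blast
qed

lemma linear_funpow: fixes f :: "'a::real_vector \<Rightarrow> 'a" shows "linear f \<Longrightarrow> linear (f ^^ n)"
proof (induction n)
  case 0 then show ?case by (simp add: linear_iff)
next
  case (Suc n) then show ?case using linear_compose[OF Suc.IH Suc.prems] by (simp add: comp_def)
qed

lemma funpow_comm1:
  assumes "f \<circ> g = g \<circ> f"
  shows "(f ^^ n) (g x) = g ((f ^^ n) x)"
proof (induction n)
  case 0 then show ?case by simp
next
  case (Suc n)
  have "f (g y) = g (f y)" for y using assms by (metis comp_apply)
  then show ?case using Suc by simp
qed

lemma funpow_comm2: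
  assumes "f \<circ> g = g \<circ> f"
  shows "(f ^^ n) ((g ^^ m) x) = (g ^^ m) ((f ^^ n) x)"
proof -
  have "(g ^^ m) (f y) = f ((g ^^ m) y)" for y using funpow_comm1[of g f m y] assms by metis
  then have "f \<circ> (g ^^ m) = (g ^^ m) \<circ> f" by (auto simp: fun_eq_iff)
  then show ?thesis by (rule funpow_comm1)
qed

lemma range_funpow_image: "(f ^^ j) ` range (f ^^ a) = range (f ^^ (j + a))"
  by (simp add: funpow_add image_comp)

lemma range_funpow_mono:
  fixes f :: "'a \<Rightarrow> 'a"
  assumes "a \<le> b" shows "range (f ^^ b) \<subseteq> range (f ^^ a)"
proof -
  have "f ^^ b = (f ^^ a) \<circ> (f ^^ (b - a))" using assms by (simp add: funpow_add[symmetric])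
  then show ?thesis by auto
qed

lemma sum_pow_range:
  fixes A B :: "'a::real_vector \<Rightarrow> 'a"
  assumes lA: "linear A" and lB: "linear B" and AB: "A \<circ> B = B \<circ> A"
    and BK: "range (B ^^ k) \<subseteq> K" and sK: "subspace K"
  shows "((\<lambda>x. A x + B x) ^^ m) x \<in> msum (range (A ^^ (m + 1 - k))) K"
proof -
  define gens where "gens m = (\<Union>j\<in>{..m}. range ((A ^^ (m - j)) \<circ> (B ^^ j)))" for m
  have ABx: "A (B y) = B (A y)" for y using AB by (metis comp_apply)
  have inG: "((\<lambda>x. A x + B x) ^^ m) x \<in> span (gens m)" for x
  proof (induction m arbitrary: x)
    case 0
    have "x \<in> gens 0" unfolding gens_def by auto
    then show ?case by (simp add: span_base)
  next
    case (Suc m)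
    define v where "v = ((\<lambda>x. A x + B x) ^^ m) x"
    have v: "v \<in> span (gens m)" unfolding v_def by (rule Suc.IH)
    have "A ` gens m \<subseteq> gens (Suc m)"
    proof
      fix z assume "z \<in> A ` gens m"
      then obtain j y where jy: "j \<le> m" "z = A ((A ^^ (m - j)) ((B ^^ j) y))" unfolding gens_def by auto
      then have "z = (A ^^ (Suc m - j)) ((B ^^ j) y)" by (simp add: Suc_diff_le)
      then have "z \<in> range ((A ^^ (Suc m - j)) \<circ> (B ^^ j))"
        using rangeI[of "(A ^^ (Suc m - j)) \<circ> (B ^^ j)" y] by simp
      moreover have "j \<in> {..Suc m}" using jy(1) by simp
      ultimately show "z \<in> gens (Suc m)" unfolding gens_def by (rule UN_I[rotated])
    qed
    then have "A ` span (gens m) \<subseteq> span (gens (Suc m))"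
      using linear_span_image[OF lA, of "gens m"] span_mono by blast
    then have Av: "A v \<in> span (gens (Suc m))" using v by blast
    have "B ` gens m \<subseteq> gens (Suc m)"
    proof
      fix z assume "z \<in> B ` gens m"
      then obtain j y where jy: "j \<le> m" "z = B ((A ^^ (m - j)) ((B ^^ j) y))" unfolding gens_def by auto
      then have "z = (A ^^ (m - j)) (B ((B ^^ j) y))" using funpow_comm1[OF AB, of "m - j"] by simp
      then have "z = (A ^^ (Suc m - Suc j)) ((B ^^ Suc j) y)" by simp
      then have "z \<in> range ((A ^^ (Suc m - Suc j)) \<circ> (B ^^ Suc j))"
        using rangeI[of "(A ^^ (Suc m - Suc j)) \<circ> (B ^^ Suc j)" y] by simp
      moreover have "Suc j \<in> {..Suc m}" using jy(1) by simp
      ultimately show "z \<in> gens (Suc m)" unfolding gens_def by (rule UN_I[rotated])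
    qed
    then have "B ` span (gens m) \<subseteq> span (gens (Suc m))"
      using linear_span_image[OF lB, of "gens m"] span_mono by blast
    then have Bv: "B v \<in> span (gens (Suc m))" using v by blast
    have "((\<lambda>x. A x + B x) ^^ Suc m) x = A v + B v" unfolding v_def by simp
    then show ?case using Av Bv by (simp add: span_add)
  qed
  have lAp: "linear (A ^^ p)" for p using lA by (rule linear_funpow)
  have sR: "subspace (range (A ^^ (m + 1 - k)))" using linear_subspace_image[OF lAp subspace_UNIV] .
  have "gens m \<subseteq> msum (range (A ^^ (m + 1 - k))) K"
  proof
    fix z assume "z \<in> gens m"
    then obtain j y where jy: "j \<le> m" "z = (A ^^ (m - j)) ((B ^^ j) y)" unfolding gens_def by auto
    show "z \<in> msum (range (A ^^ (m + 1 - k))) K"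
    proof (cases "j < k")
      case True
      define q where "q = m + 1 - k"
      have "m - j = q + (m - j - q)" unfolding q_def using True jy(1) by simp
      then have "z = (A ^^ q) ((A ^^ (m - j - q)) ((B ^^ j) y))"
        using jy(2) by (metis comp_apply funpow_add)
      then have "z \<in> range (A ^^ (m + 1 - k))" unfolding q_def by blast
      moreover have "(0::'a) \<in> K" using sK by (rule subspace_0)
      moreover have "z = z + 0" by simp
      ultimately show ?thesis unfolding msum_def by blast
    next
      case False
      have "(B ^^ j) y = (B ^^ k) ((B ^^ (j - k)) y)" using False
        by (metis comp_apply funpow_add le_add_diff_inverse not_less)
      then have "z = (B ^^ k) ((A ^^ (m - j)) ((B ^^ (j - k)) y))"
        using jy(2) funpow_comm2[OF AB] by metis
      then have "z \<in> K" using BK by blast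
      moreover have "(0::'a) \<in> range (A ^^ (m + 1 - k))" using sR by (rule subspace_0)
      moreover have "z = 0 + z" by simp
      ultimately show ?thesis unfolding msum_def by blast
    qed
  qed
  then have "span (gens m) \<subseteq> msum (range (A ^^ (m + 1 - k))) K"
    using subspace_msum[OF sR sK] by (rule span_minimal)
  then show ?thesis using inG by blast
qed



lemma scaleC_zero: "scaleC c (0::'a::complex_banach) = 0"
proof -
  have "norm (scaleC c (0::'a)) = 0" using norm_scaleC[of c "0::'a"] by simp
  then show ?thesis by simp
qed

lemma scaleC_minus: "scaleC c (- x) = - scaleC c (x::'a::complex_banach)"
proof -
  have h: "scaleC c (- x) + scaleC c x = 0" by (metis scaleC_add_right scaleC_zero add.left_inverse)
  then show ?thesis by (simp add: eq_neg_iff_add_eq_0)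
qed

lemma scaleC_decomp: "scaleC c (y::'a::complex_banach) = Re c *\<^sub>R y + Im c *\<^sub>R scaleC \<i> y"
proof -
  have e1: "Re c *\<^sub>R y = scaleC (complex_of_real (Re c)) y" by (rule scaleR_scaleC)
  have e2: "Im c *\<^sub>R scaleC \<i> y = scaleC (complex_of_real (Im c)) (scaleC \<i> y)" by (rule scaleR_scaleC)
  have e3: "scaleC (complex_of_real (Im c)) (scaleC \<i> y) = scaleC (complex_of_real (Im c) * \<i>) y"
    by (rule scaleC_scaleC)
  have e4: "scaleC (complex_of_real (Re c)) y + scaleC (complex_of_real (Im c) * \<i>) y
      = scaleC (complex_of_real (Re c) + complex_of_real (Im c) * \<i>) y"
    by (rule scaleC_add_left[symmetric])
  have e5: "complex_of_real (Re c) + complex_of_real (Im c) * \<i> = c"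
    by (simp add: complex_eq_iff)
  have "Re c *\<^sub>R y + Im c *\<^sub>R scaleC \<i> y
     = scaleC (complex_of_real (Re c)) y + scaleC (complex_of_real (Im c) * \<i>) y"
    using e1 e2 e3 by (simp only:)
  also have "\<dots> = scaleC (complex_of_real (Re c) + complex_of_real (Im c) * \<i>) y" by (rule e4)
  also have "\<dots> = scaleC c y" by (rule arg_cong[where f="\<lambda>z. scaleC z y", OF e5])
  finally show ?thesis by (rule sym)
qed

lemma cspan_sub_span: "cspan (E::'a::complex_banach set) \<subseteq> span (E \<union> scaleC \<i> ` E)"
proof
  fix x assume "x \<in> cspan E"
  then obtain E' c where x: "x = (\<Sum>y\<in>E'. scaleC (c y) y)" "finite E'" "E' \<subseteq> E"
    unfolding cspan_def by blast
  have "scaleC (c y) y \<in> span (E \<union> scaleC \<i> ` E)" if "y \<in> E'" for y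
  proof -
    have "y \<in> span (E \<union> scaleC \<i> ` E)" using that x(3) by (intro span_base) blast
    moreover have "scaleC \<i> y \<in> span (E \<union> scaleC \<i> ` E)" using that x(3) by (intro span_base) blast
    ultimately have "Re (c y) *\<^sub>R y + Im (c y) *\<^sub>R scaleC \<i> y \<in> span (E \<union> scaleC \<i> ` E)"
      by (intro span_add span_scale)
    moreover have "scaleC (c y) y = Re (c y) *\<^sub>R y + Im (c y) *\<^sub>R scaleC \<i> y" by (rule scaleC_decomp)
    ultimately show ?thesis by simp
  qed
  then show "x \<in> span (E \<union> scaleC \<i> ` E)" unfolding x(1) by (rule span_sum)
qed

lemma span_sub_cspan:
  assumes "finite (D::'a::complex_banach set)" shows "span D \<subseteq> cspan D"
proof
  fix x assume "x \<in> span D"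
  then obtain u where "x = (\<Sum>v\<in>D. u v *\<^sub>R v)" using span_finite[OF assms] by auto
  then have "x = (\<Sum>v\<in>D. scaleC (complex_of_real (u v)) v)" by (simp add: scaleR_scaleC)
  then show "x \<in> cspan D" unfolding cspan_def
    by (intro CollectI exI[of _ D] exI[where x="\<lambda>v. complex_of_real (u v)"]) (simp add: assms)
qed

lemma bco_add: "bounded_clinear_op f \<Longrightarrow> bounded_clinear_op g \<Longrightarrow> bounded_clinear_op (\<lambda>x. f x + g x)"
  unfolding bounded_clinear_op_def by (simp add: bounded_linear_add scaleC_add_right)

lemma bco_neg: "bounded_clinear_op f \<Longrightarrow> bounded_clinear_op (\<lambda>x. - f x)"
  unfolding bounded_clinear_op_def by (simp add: bounded_linear_minus scaleC_minus)

lemma bco_pow: "bounded_clinear_op f \<Longrightarrow> bounded_clinear_op (f ^^ n)"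
proof (induction n)
  case 0 then show ?case unfolding bounded_clinear_op_def by (simp add: id_def bounded_linear_ident)
next
  case (Suc n)
  then show ?case unfolding bounded_clinear_op_def
    using bounded_linear_compose[of f "f ^^ n"] by (simp add: comp_def)
qed

lemma bco_range_scaleC:
  assumes "bounded_clinear_op G" "z \<in> range G" shows "scaleC c z \<in> range G"
proof -
  obtain w where "z = G w" using assms(2) by blast
  then have "scaleC c z = G (scaleC c w)" using assms(1) unfolding bounded_clinear_op_def by simp
  then show ?thesis by simp
qed



theorem lemma2p10:
  fixes T F :: "'a::complex_banach \<Rightarrow> 'a"
  assumes "infinite_dimensional TYPE('a)"
    and "bounded_clinear_op F"
    and "\<exists>n::nat. finite_rank (F ^^ n)"
    and "bounded_clinear_op T"
    and "lower_semi_B_fredholm T"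
    and "T \<circ> F = F \<circ> T"
  shows "lower_semi_B_fredholm (\<lambda>x. T x + F x)"
proof -
  define S where "S = (\<lambda>x. T x + F x)"
  have bT: "bounded_clinear_op T" and bF: "bounded_clinear_op F" using assms by auto
  have bS: "bounded_clinear_op S" unfolding S_def using bT bF by (rule bco_add)
  have blT: "bounded_linear T" using bT unfolding bounded_clinear_op_def by blast
  have blF: "bounded_linear F" using bF unfolding bounded_clinear_op_def by blast
  have blS: "bounded_linear S" using bS unfolding bounded_clinear_op_def by blast
  have lT: "linear T" using blT by (rule bounded_linear.linear)
  have lF: "linear F" using blF by (rule bounded_linear.linear)
  have lS: "linear S" using blS by (rule bounded_linear.linear)
  have TF: "T (F x) = F (T x)" for x using assms(6) by (metis comp_apply)
  have blTp: "bounded_linear (T ^^ a)" for a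
    using bco_pow[OF bT, of a] unfolding bounded_clinear_op_def by blast
  have blSp: "bounded_linear (S ^^ a)" for a
    using bco_pow[OF bS, of a] unfolding bounded_clinear_op_def by blast
  have lTp: "linear (T ^^ a)" for a using blTp by (rule bounded_linear.linear)
  have lSp: "linear (S ^^ a)" for a using blSp by (rule bounded_linear.linear)
  define R where "R a = range (T ^^ a)" for a
  define Q where "Q m = range (S ^^ m)" for m
  have sR: "subspace (R a)" for a unfolding R_def using linear_subspace_image[OF lTp subspace_UNIV] .
  have sQ: "subspace (Q a)" for a unfolding Q_def using linear_subspace_image[OF lSp subspace_UNIV] .
  have TR: "T ` R a = R (Suc a)" for a unfolding R_def by (simp add: image_comp)
  have SQ: "S ` Q a = Q (Suc a)" for a unfolding Q_def by (simp add: image_comp)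
  obtain n0 where n0c: "closed (R n0)" and lsf: "lower_semi_fredholm_on (R n0) T"
    using assms(5) unfolding lower_semi_B_fredholm_def R_def by blast
  from lsf obtain E where E: "finite E" "E \<subseteq> R n0" "R n0 = {y + z |y z. y \<in> T ` R n0 \<and> z \<in> cspan E}"
    unfolding lower_semi_fredholm_on_def by blast
  define E2 where "E2 = E \<union> scaleC \<i> ` E"
  have fE2: "finite E2" unfolding E2_def using E(1) by simp
  have base: "R n0 \<subseteq> msum (R (Suc n0)) (span E2)"
  proof
    fix x assume "x \<in> R n0"
    then obtain y z where yz: "x = y + z" "y \<in> T ` R n0" "z \<in> cspan E" using E(3) by blast
    have "z \<in> span E2" using yz(3) cspan_sub_span[of E] unfolding E2_def by blast
    moreover have "y \<in> R (Suc n0)" using yz(2) TR by blast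
    ultimately show "x \<in> msum (R (Suc n0)) (span E2)" unfolding msum_def using yz(1) by blast
  qed
  have codim: "R (n0 + j) \<subseteq> msum (R (Suc (n0 + j))) (span ((T ^^ j) ` E2))" for j
  proof -
    have "R (n0 + j) = (T ^^ j) ` R n0" unfolding R_def using range_funpow_image[where f=T and j=j and a=n0]
      by (simp add: add.commute)
    also have "\<dots> \<subseteq> (T ^^ j) ` msum (R (Suc n0)) (span E2)" using base by (rule image_mono)
    also have "\<dots> \<subseteq> msum ((T ^^ j) ` R (Suc n0)) ((T ^^ j) ` span E2)" by (rule image_msum_sub[OF lTp])
    also have "(T ^^ j) ` R (Suc n0) = R (Suc (n0 + j))" unfolding R_def range_funpow_image by (simp add: add.commute)
    also have "(T ^^ j) ` span E2 = span ((T ^^ j) ` E2)" using linear_span_image[OF lTp] by simp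
    finally show ?thesis .
  qed
  have closedR: "closed (R (n0 + j))" for j
  proof (induction j)
    case 0 then show ?case using n0c by simp
  next
    case (Suc j)
    have "closed (range (T ^^ Suc (n0 + j)))"
    proof (rule closed_range_fincodim[OF blTp Suc.IH sR])
      show "range (T ^^ Suc (n0 + j)) \<subseteq> R (n0 + j)" unfolding R_def by (rule range_funpow_mono) simp
      show "finite ((T ^^ j) ` E2)" using fE2 by simp
      show "R (n0 + j) \<subseteq> msum (range (T ^^ Suc (n0 + j))) (span ((T ^^ j) ` E2))"
        using codim[of j] unfolding R_def .
    qed
    then show ?case unfolding R_def by simp
  qed
  have closedR': "closed (R a)" if "a \<ge> n0" for a
    using closedR[of "a - n0"] that by simp
  have codim': "\<exists>D. finite D \<and> R a \<subseteq> msum (R (Suc a)) (span D)" if "a \<ge> n0" for a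
    using codim[of "a - n0"] that fE2 by (intro exI[of _ "(T ^^ (a - n0)) ` E2"]) simp
  have chain: "\<exists>D. finite D \<and> R a \<subseteq> msum (R b) (span D)" if an: "a \<ge> n0" for a b
  proof (cases "b \<le> a")
    case True
    have "R a \<subseteq> R b" unfolding R_def using True by (rule range_funpow_mono)
    then have "R a \<subseteq> msum (R b) (span {})" using msum_self[of "R b" "{}"] by blast
    then show ?thesis by blast
  next
    case False
    have "\<exists>D. finite D \<and> R a \<subseteq> msum (R (a + d)) (span D)" for d
    proof (induction d)
      case 0
      have "R a \<subseteq> msum (R (a + 0)) (span {})" using msum_self[of "R a" "{}"] by simp
      then show ?case by blast
    next
      case (Suc d)
      then obtain D where D: "finite D" "R a \<subseteq> msum (R (a + d)) (span D)" by blast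
      obtain D' where D': "finite D'" "R (a + d) \<subseteq> msum (R (Suc (a + d))) (span D')"
        using codim'[of "a + d"] an by auto
      have "R a \<subseteq> msum (R (Suc (a + d))) (span (D \<union> D'))" by (rule msum_trans1[OF D(2) D'(2)])
      then show ?case using D(1) D'(1) by (intro exI[of _ "D \<union> D'"]) simp
    qed
    from this[of "b - a"] show ?thesis using False by simp
  qed
  obtain k where "finite_rank (F ^^ k)" using assms(3) by blast
  then obtain S0 where S0: "finite S0" "range (F ^^ k) \<subseteq> cspan S0" unfolding finite_rank_def by blast
  define K0 where "K0 = S0 \<union> scaleC \<i> ` S0"
  have fK0: "finite K0" unfolding K0_def using S0(1) by simp
  have FK: "range (F ^^ k) \<subseteq> span K0" using S0(2) cspan_sub_span[of S0] unfolding K0_def by blast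
  have S1: "(S ^^ m) x \<in> msum (R (m + 1 - k)) (span K0)" for m x
    using sum_pow_range[OF lT lF assms(6) FK subspace_span, of m x] unfolding S_def R_def .
  define NF where "NF = (\<lambda>x. - F x)"
  have lNF: "linear NF" unfolding NF_def linear_iff using linear_add[OF lF] linear_scale[OF lF] by simp
  have comm: "S \<circ> NF = NF \<circ> S"
  proof
    fix x
    have "S (NF x) = - T (F x) - F (F x)" unfolding S_def NF_def using linear_neg[OF lT] linear_neg[OF lF] by simp
    moreover have "NF (S x) = - F (T x) - F (F x)" unfolding S_def NF_def using linear_add[OF lF] by simp
    ultimately show "(S \<circ> NF) x = (NF \<circ> S) x" using TF by simp
  qed
  have powNF: "(NF ^^ j) x = ((-1::real) ^ j) *\<^sub>R (F ^^ j) x" for j x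
  proof (induction j)
    case 0 then show ?case by simp
  next
    case (Suc j)
    have "(NF ^^ Suc j) x = - F (((-1::real) ^ j) *\<^sub>R (F ^^ j) x)" using Suc by (simp add: NF_def)
    also have "\<dots> = ((-1::real) ^ Suc j) *\<^sub>R (F ^^ Suc j) x" using linear_scale[OF lF] by simp
    finally show ?case .
  qed
  have NFK: "range (NF ^^ k) \<subseteq> span K0"
  proof
    fix z assume "z \<in> range (NF ^^ k)"
    then obtain x where "z = (NF ^^ k) x" by blast
    then have "z = ((-1::real) ^ k) *\<^sub>R (F ^^ k) x" using powNF by simp
    moreover have "(F ^^ k) x \<in> span K0" using FK by blast
    ultimately show "z \<in> span K0" by (simp add: span_scale)
  qed
  have SNF: "(\<lambda>x. S x + NF x) = T" unfolding S_def NF_def by (simp add: fun_eq_iff)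
  have S2: "(T ^^ m) x \<in> msum (Q (m + 1 - k)) (span K0)" for m x
    using sum_pow_range[OF lS lNF comm NFK subspace_span, of m x] unfolding SNF Q_def .
  have S2': "R m \<subseteq> msum (Q (m + 1 - k)) (span K0)" for m unfolding R_def using S2 by blast
  have S1': "Q m \<subseteq> msum (R (m + 1 - k)) (span K0)" for m unfolding Q_def using S1 by blast
  have Qc: "closed (Q m')" if m': "m' \<ge> n0 + k + 1" for m'
  proof -
    define a where "a = m' + 1 - k"
    define b where "b = m' + k - 1"
    have an0: "a \<ge> n0" unfolding a_def using m' by simp
    have ba: "b + 1 - k = m'" unfolding b_def using m' by simp
    have Ya: "closed (msum (R a) (span K0)) \<and> subspace (msum (R a) (span K0))"
      using closed_sum_fin[OF fK0 closedR'[OF an0] sR] .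
    obtain D where D: "finite D" "R a \<subseteq> msum (R b) (span D)" using chain[OF an0] by blast
    have "R b \<subseteq> msum (Q m') (span K0)" using S2'[of b] unfolding ba .
    then have "R a \<subseteq> msum (Q m') (span (D \<union> K0))" by (rule msum_trans1[OF D(2)])
    then have Ycov: "msum (R a) (span K0) \<subseteq> msum (Q m') (span ((D \<union> K0) \<union> K0))"
      by (rule msum_trans2)
    have "closed (range (S ^^ m'))"
    proof (rule closed_range_fincodim[OF blSp])
      show "closed (msum (R a) (span K0))" using Ya by blast
      show "subspace (msum (R a) (span K0))" using Ya by blast
      show "range (S ^^ m') \<subseteq> msum (R a) (span K0)" using S1'[of m'] unfolding Q_def a_def .
      show "finite ((D \<union> K0) \<union> K0)" using D(1) fK0 by simp
      show "msum (R a) (span K0) \<subseteq> msum (range (S ^^ m')) (span ((D \<union> K0) \<union> K0))"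
        using Ycov unfolding Q_def .
    qed
    then show ?thesis unfolding Q_def .
  qed
  define m where "m = n0 + k + 1"
  have Qm: "closed (Q m)" using Qc[of m] unfolding m_def by simp
  have QSm: "closed (Q (Suc m))" using Qc[of "Suc m"] unfolding m_def by simp
  obtain D3 where D3: "finite D3" "Q m \<subseteq> msum (Q (Suc m)) (span D3)"
  proof -
    have an0: "m + 1 - k \<ge> n0" unfolding m_def by simp
    obtain D where D: "finite D" "R (m + 1 - k) \<subseteq> msum (R (m + k)) (span D)"
      using chain[OF an0] by blast
    have "m + k + 1 - k = Suc m" by simp
    then have "R (m + k) \<subseteq> msum (Q (Suc m)) (span K0)" using S2'[of "m + k"] by simp
    then have "R (m + 1 - k) \<subseteq> msum (Q (Suc m)) (span (D \<union> K0))" by (rule msum_trans1[OF D(2)])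
    then have "Q m \<subseteq> msum (Q (Suc m)) (span (K0 \<union> (D \<union> K0)))" by (rule msum_trans1[OF S1'[of m]])
    then show ?thesis using that D(1) fK0 by (metis finite_UnI)
  qed
  define P where "P = Q m \<inter> span D3"
  obtain Eb where Eb: "Eb \<subseteq> P" "independent Eb" "P \<subseteq> span Eb" "card Eb = dim P"
    by (rule basis_exists[of P])
  have "Eb \<subseteq> span D3" using Eb(1) unfolding P_def by blast
  then have fEb: "finite Eb" using independent_span_bound[OF D3(1) Eb(2)] by blast
  have EbQ: "Eb \<subseteq> Q m" using Eb(1) unfolding P_def by blast
  have QsubQ: "Q (Suc m) \<subseteq> Q m" unfolding Q_def by (rule range_funpow_mono) simp
  have cspanQ: "cspan Eb \<subseteq> Q m"
  proof
    fix z assume "z \<in> cspan Eb"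
    then obtain E' c where z: "z = (\<Sum>y\<in>E'. scaleC (c y) y)" "finite E'" "E' \<subseteq> Eb"
      unfolding cspan_def by blast
    have "scaleC (c y) y \<in> Q m" if "y \<in> E'" for y
      using bco_range_scaleC[OF bco_pow[OF bS, of m], of y "c y"] that z(3) EbQ unfolding Q_def by blast
    then show "z \<in> Q m" unfolding z(1) using sQ by (simp add: subspace_sum)
  qed
  have eqQ: "Q m = {y + z |y z. y \<in> S ` Q m \<and> z \<in> cspan Eb}"
  proof
    show "Q m \<subseteq> {y + z |y z. y \<in> S ` Q m \<and> z \<in> cspan Eb}"
    proof
      fix q assume q: "q \<in> Q m"
      then obtain u v where uv: "q = u + v" "u \<in> Q (Suc m)" "v \<in> span D3" using D3(2) unfolding msum_def by blast
      have "v = q - u" using uv by simp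
      moreover have "q - u \<in> Q m" using sQ q uv(2) QsubQ by (simp add: subspace_diff subsetD)
      ultimately have "v \<in> P" unfolding P_def using uv(3) by simp
      then have "v \<in> span Eb" using Eb(3) by blast
      then have "v \<in> cspan Eb" using span_sub_cspan[OF fEb] by blast
      moreover have "u \<in> S ` Q m" using uv(2) SQ by blast
      ultimately show "q \<in> {y + z |y z. y \<in> S ` Q m \<and> z \<in> cspan Eb}" using uv(1) by blast
    qed
    show "{y + z |y z. y \<in> S ` Q m \<and> z \<in> cspan Eb} \<subseteq> Q m"
    proof
      fix x assume "x \<in> {y + z |y z. y \<in> S ` Q m \<and> z \<in> cspan Eb}"
      then obtain y z where yz: "x = y + z" "y \<in> S ` Q m" "z \<in> cspan Eb" by blast
      have "y \<in> Q m" using yz(2) SQ QsubQ by blast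
      moreover have "z \<in> Q m" using yz(3) cspanQ by blast
      ultimately show "x \<in> Q m" using yz(1) sQ by (simp add: subspace_add)
    qed
  qed
  have "lower_semi_fredholm_on (Q m) S"
    unfolding lower_semi_fredholm_on_def
  proof (intro conjI exI[of _ Eb])
    show "closed (S ` Q m)" using QSm SQ by simp
    show "finite Eb" by (rule fEb)
    show "Eb \<subseteq> Q m" by (rule EbQ)
    show "Q m = {y + z |y z. y \<in> S ` Q m \<and> z \<in> cspan Eb}" by (rule eqQ)
  qed
  then have "lower_semi_B_fredholm S"
    unfolding lower_semi_B_fredholm_def using Qm unfolding Q_def by blast
  then show ?thesis unfolding S_def .
qed


end
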